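(* Let $V$ be a finite-dimensional vector space over a field and let $G$ be a (not necessarily amenable) group. Then a symmetric linear cellular automaton $\tau:V^G\to V^G$ is surjective if and only if it is pre-injective.
   Context: A linear cellular automaton over $G$ with alphabet $V$ is a linear map $\tau:V^G\to V^G$ for which there are a finite set $M\subset G$ and linear maps $A_m:V\to V$ ($m\in M$) with $\tau(f)(g)=\sum_{m\in M}A_mf(gm)$ for all $f\in V^G$, $g\in G$. Writing $V=\mathbb{K}^r$, the transpose $\tau'$ of $\tau$ is the linear map whose matrix with respect to the basis $\{\delta_g^i\}$ of finitely supported functions ($\delta_g^i(g)=e_i$, $\delta_g^i(h)=0$ for $h\neq g$) is the transpose of the matrix of $\tau$; explicitly $\tau'(f)(g)=\sum_{m\in M}A_m^{T}f(gm^{-1})$. $\tau$ is symmetric if $\tau'=\tau$. A linear map on $V^G$ is pre-injective if its restriction to the finitely supported functions is injective. *)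

theory Defs
  imports "HOL-Analysis.Analysis"
begin

text \<open>The group G is a type of class group_add (written additively: gm is g + m,
  m inverse is - m). The alphabet is V = K^n, i.e. 'k ^ 'n with 'k a field and 'n a
  finite index type; linear maps V to V are n x n matrices.\<close>

definition lca :: "'g::group_add set \<Rightarrow> ('g \<Rightarrow> 'k::field^'n^'n)
    \<Rightarrow> ('g \<Rightarrow> 'k^'n) \<Rightarrow> ('g \<Rightarrow> 'k^'n)" where
  "lca M A f g = (\<Sum>m\<in>M. A m *v f (g + m))"

definition lca_transpose :: "'g::group_add set \<Rightarrow> ('g \<Rightarrow> 'k::field^'n^'n)
    \<Rightarrow> ('g \<Rightarrow> 'k^'n) \<Rightarrow> ('g \<Rightarrow> 'k^'n)" where
  "lca_transpose M A f g = (\<Sum>m\<in>M. transpose (A m) *v f (g + - m))"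

definition finitely_supported :: "('g \<Rightarrow> 'v::zero) set" where
  "finitely_supported = {f. finite {g. f g \<noteq> 0}}"

definition pre_injective :: "(('g \<Rightarrow> 'v::zero) \<Rightarrow> ('g \<Rightarrow> 'w)) \<Rightarrow> bool" where
  "pre_injective \<tau> \<longleftrightarrow> inj_on \<tau> finitely_supported"

end

theory Submission
  imports Defs "HOL-Library.Function_Algebras"
begin

definition sc :: "'k::field \<Rightarrow> ('g \<Rightarrow> 'k^'n) \<Rightarrow> ('g \<Rightarrow> 'k^'n)" where
  "sc c f = (\<lambda>g. c *s f g)"

lemma vs_sc: "vector_space (sc :: 'k::field \<Rightarrow> ('g \<Rightarrow> 'k^'n) \<Rightarrow> _)"
  unfolding vector_space_def sc_def
  by (auto simp: fun_eq_iff vector_add_ldistrib vector_sadd_rdistrib vector_smult_assoc)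

lemma vsp_sc: "vector_space_pair (sc :: 'k::field \<Rightarrow> ('g \<Rightarrow> 'k^'n) \<Rightarrow> _) sc"
  by (simp add: vector_space_pair_def vs_sc)

definition dot :: "'k::field^'n \<Rightarrow> 'k^'n \<Rightarrow> 'k" where
  "dot x y = (\<Sum>i\<in>UNIV. x$i * y$i)"

definition pair :: "('g \<Rightarrow> 'k::field^'n) \<Rightarrow> ('g \<Rightarrow> 'k^'n) \<Rightarrow> 'k" where
  "pair \<psi> f = (\<Sum>g\<in>{g. \<psi> g \<noteq> 0}. dot (\<psi> g) (f g))"

definition dl :: "'g \<Rightarrow> 'n \<Rightarrow> ('g \<Rightarrow> 'k::field^'n)" where
  "dl g i = (\<lambda>h. if h = g then axis i 1 else 0)"

lemma if01_mult: "(if P then 1 else 0) * x = (if P then x else (0::'a::semiring_1))"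
  by simp

lemma if01_mult': "x * (if P then 1 else 0) = (if P then x else (0::'a::semiring_1))"
  by simp

lemma sum_delta_mult: "(\<Sum>j\<in>(UNIV::'n::finite set). (c j::'a::semiring_1) * (if l = j then 1 else 0)) = c l"
proof -
  have "(\<Sum>j\<in>(UNIV::'n set). c j * (if l = j then 1 else 0)) = (\<Sum>j\<in>UNIV. if l = j then c j else 0)"
    by (rule sum.cong) auto
  then show ?thesis by simp
qed

lemma dot_0 [simp]: "dot 0 y = 0" by (simp add: dot_def)
lemma dot_add: "dot (x + y) z = dot x z + dot y z"
  by (simp add: dot_def distrib_right sum.distrib)
lemma dot_scale: "dot (c *s x) z = c * dot x z"
  by (simp add: dot_def sum_distrib_left mult.assoc)
lemma dot_sum: "dot (sum F X) y = (\<Sum>x\<in>X. dot (F x) y)"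
  unfolding dot_def by (simp add: sum_component sum_distrib_right) (rule sum.swap)
lemma dot_sum_right: "dot y (sum F X) = (\<Sum>x\<in>X. dot y (F x))"
  unfolding dot_def by (simp add: sum_component sum_distrib_left) (rule sum.swap)

lemma dot_transpose: "dot (transpose A *v x) y = dot x (A *v y)"
  unfolding dot_def transpose_def matrix_vector_mult_def
  apply (simp add: sum_distrib_left sum_distrib_right)
  apply (subst sum.swap)
  apply (simp add: mult_ac)
  done

lemma pair_sup:
  assumes "finite S" "{g. \<psi> g \<noteq> 0} \<subseteq> S"
  shows "pair \<psi> f = (\<Sum>g\<in>S. dot (\<psi> g) (f g))"
  unfolding pair_def
  by (rule sum.mono_neutral_left) (use assms in auto)

lemma fs_iff: "\<psi> \<in> finitely_supported \<longleftrightarrow> finite {g. \<psi> g \<noteq> 0}"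
  by (simp add: finitely_supported_def)

lemma pair_add:
  assumes "\<psi>1 \<in> finitely_supported" "\<psi>2 \<in> finitely_supported"
  shows "pair (\<psi>1 + \<psi>2) f = pair \<psi>1 f + pair \<psi>2 f"
proof -
  let ?S = "{g. \<psi>1 g \<noteq> 0} \<union> {g. \<psi>2 g \<noteq> 0}"
  have fin: "finite ?S" using assms by (simp add: fs_iff)
  have "pair (\<psi>1 + \<psi>2) f = (\<Sum>g\<in>?S. dot ((\<psi>1 + \<psi>2) g) (f g))"
    by (rule pair_sup[OF fin]) auto
  also have "\<dots> = (\<Sum>g\<in>?S. dot (\<psi>1 g) (f g)) + (\<Sum>g\<in>?S. dot (\<psi>2 g) (f g))"
    by (simp add: dot_add sum.distrib)
  also have "\<dots> = pair \<psi>1 f + pair \<psi>2 f"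
    using pair_sup[OF fin, of \<psi>1 f] pair_sup[OF fin, of \<psi>2 f] by auto
  finally show ?thesis .
qed

lemma pair_scale:
  assumes "\<psi> \<in> finitely_supported"
  shows "pair (sc c \<psi>) f = c * pair \<psi> f"
proof -
  let ?S = "{g. \<psi> g \<noteq> 0}"
  have fin: "finite ?S" using assms by (simp add: fs_iff)
  have "pair (sc c \<psi>) f = (\<Sum>g\<in>?S. dot (sc c \<psi> g) (f g))"
    by (rule pair_sup[OF fin]) (auto simp: sc_def)
  also have "\<dots> = c * pair \<psi> f"
    by (simp add: sc_def dot_scale sum_distrib_left pair_def)
  finally show ?thesis .
qed

lemma pair_zero [simp]: "pair 0 f = 0"
  by (simp add: pair_def)

lemma pair_delta_right:
  assumes "\<psi> \<in> finitely_supported"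
  shows "pair \<psi> (dl k l) = \<psi> k $ l"
proof -
  let ?S = "insert k {g. \<psi> g \<noteq> 0}"
  have fin: "finite ?S" using assms by (simp add: fs_iff)
  have "pair \<psi> (dl k l) = (\<Sum>g\<in>?S. dot (\<psi> g) (dl k l g))"
    by (rule pair_sup[OF fin]) auto
  also have "\<dots> = (\<Sum>g\<in>?S. if g = k then \<psi> k $ l else 0)"
    by (rule sum.cong) (auto simp: dl_def dot_def axis_def if_distrib cong: if_cong)
  also have "\<dots> = \<psi> k $ l" using fin by simp
  finally show ?thesis .
qed

lemma pair_delta_left: "pair (dl k l) f = f k $ l"
proof -
  have "pair (dl k l) f = (\<Sum>g\<in>{k}. dot (dl k l g) (f g))"
    by (rule pair_sup) (auto simp: dl_def)
  also have "\<dots> = f k $ l"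
    by (simp add: dl_def dot_def axis_def if01_mult)
  finally show ?thesis .
qed



lemma fs_lca_transpose:
  assumes M: "finite M" and fs: "\<psi> \<in> finitely_supported"
  shows "lca_transpose M A \<psi> \<in> finitely_supported"
proof -
  let ?S = "{g. \<psi> g \<noteq> 0}"
  let ?T = "\<Union>m\<in>M. (\<lambda>g. g + m) ` ?S"
  have "finite ?T" using M fs by (simp add: fs_iff)
  moreover have "{h. lca_transpose M A \<psi> h \<noteq> 0} \<subseteq> ?T"
  proof
    fix h assume h: "h \<in> {h. lca_transpose M A \<psi> h \<noteq> 0}"
    show "h \<in> ?T"
    proof (rule ccontr)
      assume nt: "h \<notin> ?T"
      have "\<forall>m\<in>M. \<psi> (h + - m) = 0"
      proof
        fix m assume "m \<in> M"
        show "\<psi> (h + - m) = 0"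
        proof (rule ccontr)
          assume "\<psi> (h + - m) \<noteq> 0"
          then have "h + - m + m \<in> ?T" using \<open>m \<in> M\<close> by blast
          then show False using nt by (simp add: add.assoc)
        qed
      qed
      then have "lca_transpose M A \<psi> h = 0"
        by (simp add: lca_transpose_def)
      then show False using h by simp
    qed
  qed
  ultimately show ?thesis by (simp add: fs_iff finite_subset)
qed

lemma pair_transpose:
  assumes M: "finite M" and fs: "\<psi> \<in> finitely_supported"
  shows "pair (lca_transpose M A \<psi>) f = pair \<psi> (lca M A f)"
proof -
  let ?S = "{g. \<psi> g \<noteq> 0}"
  let ?T = "\<Union>m\<in>M. (\<lambda>g. g + m) ` ?S"
  have finS: "finite ?S" using fs by (simp add: fs_iff)
  have finT: "finite ?T" using M fs by (simp add: fs_iff)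
  have sub: "{h. lca_transpose M A \<psi> h \<noteq> 0} \<subseteq> ?T"
  proof
    fix h assume h: "h \<in> {h. lca_transpose M A \<psi> h \<noteq> 0}"
    show "h \<in> ?T"
    proof (rule ccontr)
      assume nt: "h \<notin> ?T"
      have "\<forall>m\<in>M. \<psi> (h + - m) = 0"
      proof
        fix m assume "m \<in> M"
        show "\<psi> (h + - m) = 0"
        proof (rule ccontr)
          assume "\<psi> (h + - m) \<noteq> 0"
          then have "h + - m + m \<in> ?T" using \<open>m \<in> M\<close> by blast
          then show False using nt by (simp add: add.assoc)
        qed
      qed
      then have "lca_transpose M A \<psi> h = 0"
        by (simp add: lca_transpose_def)
      then show False using h by simp
    qed
  qed
  have inner: "(\<Sum>h\<in>?T. dot (transpose (A m) *v \<psi> (h + - m)) (f h))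
      = (\<Sum>g\<in>?S. dot (\<psi> g) (A m *v f (g + m)))" if m: "m \<in> M" for m
  proof -
    have "(\<Sum>h\<in>?T. dot (transpose (A m) *v \<psi> (h + - m)) (f h))
        = (\<Sum>h\<in>(\<lambda>g. g + m) ` ?S. dot (transpose (A m) *v \<psi> (h + - m)) (f h))"
    proof (rule sum.mono_neutral_right[OF finT])
      show "(\<lambda>g. g + m) ` ?S \<subseteq> ?T" using m by blast
      show "\<forall>h\<in>?T - (\<lambda>g. g + m) ` ?S. dot (transpose (A m) *v \<psi> (h + - m)) (f h) = 0"
      proof
        fix h assume "h \<in> ?T - (\<lambda>g. g + m) ` ?S"
        then have "h \<notin> (\<lambda>g. g + m) ` ?S" by blast
        then have nh: "h \<notin> (\<lambda>g. g + m) ` ?S" by blast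
        have "\<psi> (h + - m) = 0"
        proof (rule ccontr)
          assume "\<psi> (h + - m) \<noteq> 0"
          then have "h + - m + m \<in> (\<lambda>g. g + m) ` ?S" by blast
          then show False using nh by (simp add: add.assoc)
        qed
        then show "dot (transpose (A m) *v \<psi> (h + - m)) (f h) = 0" by simp
      qed
    qed
    also have "\<dots> = (\<Sum>g\<in>?S. dot (transpose (A m) *v \<psi> (g + m + - m)) (f (g + m)))"
      by (rule sum.reindex_cong[where l="\<lambda>g. g + m"]) (auto simp: inj_on_def)
    also have "\<dots> = (\<Sum>g\<in>?S. dot (\<psi> g) (A m *v f (g + m)))"
      by (simp add: dot_transpose add.assoc del: transpose_matrix_vector)
    finally show ?thesis .
  qed
  have "pair (lca_transpose M A \<psi>) f = (\<Sum>h\<in>?T. dot (lca_transpose M A \<psi> h) (f h))"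
    by (rule pair_sup[OF finT sub])
  also have "\<dots> = (\<Sum>h\<in>?T. \<Sum>m\<in>M. dot (transpose (A m) *v \<psi> (h + - m)) (f h))"
    by (simp add: lca_transpose_def dot_sum)
  also have "\<dots> = (\<Sum>m\<in>M. \<Sum>h\<in>?T. dot (transpose (A m) *v \<psi> (h + - m)) (f h))"
    by (rule sum.swap)
  also have "\<dots> = (\<Sum>m\<in>M. \<Sum>g\<in>?S. dot (\<psi> g) (A m *v f (g + m)))"
    by (rule sum.cong) (use inner in auto)
  also have "\<dots> = (\<Sum>g\<in>?S. \<Sum>m\<in>M. dot (\<psi> g) (A m *v f (g + m)))"
    by (rule sum.swap)
  also have "\<dots> = pair \<psi> (lca M A f)"
    by (simp add: pair_def lca_def dot_sum_right)
  finally show ?thesis .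
qed

lemma lca_add: "lca M A (f1 + f2) = lca M A f1 + lca M A f2"
  by (simp add: lca_def fun_eq_iff matrix_vector_right_distrib sum.distrib)

lemma lca_diff: "lca M A (f1 - f2) = lca M A f1 - lca M A f2"
  by (simp add: lca_def fun_eq_iff matrix_vector_mult_diff_distrib sum_subtractf)

lemma lca_scale: "lca M A (sc c f) = sc c (lca M A f)"
  by (simp add: lca_def sc_def fun_eq_iff vec.scale_sum_right vector_scalar_commute)

lemma linear_lca: "Vector_Spaces.linear sc sc (lca M A)"
  by (simp add: Vector_Spaces.linear_iff vs_sc lca_add lca_scale)


lemma fs_add: "(f1::'g \<Rightarrow> 'k::field^'n) \<in> finitely_supported \<Longrightarrow> f2 \<in> finitely_supported \<Longrightarrow> f1 + f2 \<in> finitely_supported"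
  unfolding fs_iff
  by (rule finite_subset[of _ "{g. f1 g \<noteq> 0} \<union> {g. f2 g \<noteq> 0}"]) auto

lemma fs_diff: "(f1::'g \<Rightarrow> 'k::field^'n) \<in> finitely_supported \<Longrightarrow> f2 \<in> finitely_supported \<Longrightarrow> f1 - f2 \<in> finitely_supported"
  unfolding fs_iff
  by (rule finite_subset[of _ "{g. f1 g \<noteq> 0} \<union> {g. f2 g \<noteq> 0}"]) auto

lemma fs_scale: "f \<in> finitely_supported \<Longrightarrow> sc c f \<in> finitely_supported"
  unfolding fs_iff sc_def
  by (rule finite_subset[of _ "{g. f g \<noteq> 0}"]) auto

lemma fs_zero: "(0::'g \<Rightarrow> 'k::field^'n) \<in> finitely_supported"
  by (simp add: fs_iff)

lemma fs_dl: "dl g i \<in> finitely_supported"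
  unfolding fs_iff dl_def
  by (rule finite_subset[of _ "{g}"]) auto

lemma subspace_fs: "module.subspace (sc :: 'k::field \<Rightarrow> ('g \<Rightarrow> 'k^'n) \<Rightarrow> _) finitely_supported"
  unfolding module.subspace_def[OF module_iff_vector_space[THEN iffD2, OF vs_sc]]
  using fs_zero fs_add fs_scale by blast

lemma sum_fun_apply: "(sum F X) k = (\<Sum>x\<in>X. F x k)"
  by (induction X rule: infinite_finite_induct) auto

lemma lca_transpose_dl:
  "lca_transpose M A (dl g i) = (\<Sum>m\<in>M. \<Sum>j\<in>UNIV. sc (A m $ i $ j) (dl (g + m) j))"
proof (rule ext, rule iffD2[OF vec_eq_iff], rule allI)
  fix k l
  have eq: "(k + - m = g) = (k = g + m)" for m
    by (metis add.assoc add.left_inverse add.right_inverse add_0_right)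
  have "lca_transpose M A (dl g i) k $ l = (\<Sum>m\<in>M. if k = g + m then A m $ i $ l else 0)"
    unfolding lca_transpose_def sum_component
    by (rule sum.cong) (auto simp: dl_def eq matrix_vector_mult_def transpose_def axis_def if01_mult if01_mult'
        cong: if_cong)
  also have "\<dots> = (\<Sum>m\<in>M. \<Sum>j\<in>UNIV. sc (A m $ i $ j) (dl (g + m) j)) k $ l"
    unfolding sum_fun_apply sum_component
    apply (rule sum.cong[OF refl])
    apply (auto simp: sc_def dl_def axis_def)
    apply (simp add: sum_delta_mult)
    done
  finally show "lca_transpose M A (dl g i) k $ l = (\<Sum>m\<in>M. \<Sum>j\<in>UNIV. sc (A m $ i $ j) (dl (g + m) j)) k $ l" .
qed

lemma dir1:
  fixes M :: "'g::group_add set"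
    and A :: "'g \<Rightarrow> 'k::field^'n^'n"
  assumes "finite M"
    and "lca_transpose M A = lca M A"
    and su: "surj (lca M A)"
  shows "pre_injective (lca M A)"
    unfolding pre_injective_def
  proof (rule inj_onI)
    fix \<phi>1 \<phi>2 :: "'g \<Rightarrow> 'k^'n"
    assume f1: "\<phi>1 \<in> finitely_supported" and f2: "\<phi>2 \<in> finitely_supported"
      and eq: "lca M A \<phi>1 = lca M A \<phi>2"
    define \<psi> where "\<psi> = \<phi>1 - \<phi>2"
    have fs: "\<psi> \<in> finitely_supported" using fs_diff[OF f1 f2] by (simp add: \<psi>_def)
    have z: "lca M A \<psi> = 0" using eq by (simp add: \<psi>_def lca_diff)
    have "\<psi> k $ l = 0" for k l
    proof -
      obtain f where f: "lca M A f = dl k l" using su by (metis surjD)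
      have "\<psi> k $ l = pair \<psi> (lca M A f)" using pair_delta_right[OF fs] f by simp
      also have "\<dots> = pair (lca_transpose M A \<psi>) f" using pair_transpose[OF assms(1) fs] by simp
      also have "\<dots> = 0" using z assms(2) by simp
      finally show ?thesis .
    qed
    then have "\<psi> = 0" by (simp add: fun_eq_iff vec_eq_iff)
    then show "\<phi>1 = \<phi>2" by (simp add: \<psi>_def)
  qed

lemma dir2:
  fixes M :: "'g::group_add set"
    and A :: "'g \<Rightarrow> 'k::field^'n^'n"
  assumes "finite M"
    and "lca_transpose M A = lca M A"
    and pi: "pre_injective (lca M A)"
  shows "surj (lca M A)"
proof -
  obtain L where Lr: "range L \<subseteq> finitely_supported" and Ll: "Vector_Spaces.linear sc sc L"
    and Linv: "\<forall>v\<in>finitely_supported. L (lca M A v) = v"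
    using vector_space_pair.linear_exists_left_inverse_on[OF vsp_sc linear_lca subspace_fs
        pi[unfolded pre_injective_def]] by blast
  have Ladd: "L (x + y) = L x + L y" for x y using Ll by (simp add: Vector_Spaces.linear_iff)
  have Lsc: "L (sc c x) = sc c (L x)" for c x using Ll by (simp add: Vector_Spaces.linear_iff)
  have sc00: "sc 0 0 = (0::'g \<Rightarrow> 'k^'n)" by (simp add: sc_def fun_eq_iff)
  have L0': "L 0 = sc 0 (L 0)" using Lsc[of 0 0] by (simp only: sc00)
  have L0: "L 0 = 0" by (subst L0') (simp add: sc_def fun_eq_iff)
  show ?thesis
  proof (rule surjI)
    fix h :: "'g \<Rightarrow> 'k^'n"
    define \<mu> where "\<mu> v = pair (L v) h" for v
    have Lfs: "L v \<in> finitely_supported" for v using Lr by blast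
    have \<mu>add: "\<mu> (x + y) = \<mu> x + \<mu> y" for x y
      by (simp add: \<mu>_def Ladd pair_add[OF Lfs Lfs])
    have \<mu>sc: "\<mu> (sc c x) = c * \<mu> x" for c x
      by (simp add: \<mu>_def Lsc pair_scale[OF Lfs])
    have \<mu>0: "\<mu> 0 = 0" by (simp add: \<mu>_def L0)
    have \<mu>sum: "\<mu> (sum F X) = (\<Sum>x\<in>X. \<mu> (F x))" for F :: "'a \<Rightarrow> 'g \<Rightarrow> 'k^'n" and X
    proof (induction X rule: infinite_finite_induct)
      case (infinite A) then show ?case by (simp only: sum.infinite[OF infinite] \<mu>0)
    next
      case empty then show ?case by (simp only: sum.empty \<mu>0)
    next
      case (insert x Y) show ?case
        by (simp only: sum.insert[OF insert(1,2)] \<mu>add insert(3))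
    qed
    define f where "f g = (\<chi> i. \<mu> (dl g i))" for g
    show "lca M A f = h"
    proof (rule ext, rule iffD2[OF vec_eq_iff], rule allI)
      fix g i
      have "lca M A f g $ i = (\<Sum>m\<in>M. \<Sum>j\<in>UNIV. A m $ i $ j * \<mu> (dl (g + m) j))"
        by (simp add: lca_def f_def sum_component matrix_vector_mult_def)
      also have "\<dots> = \<mu> (\<Sum>m\<in>M. \<Sum>j\<in>UNIV. sc (A m $ i $ j) (dl (g + m) j))"
        by (simp add: \<mu>sum \<mu>sc)
      also have "\<dots> = \<mu> (lca M A (dl g i))"
        using lca_transpose_dl[of M A g i] assms(2) by simp
      also have "\<dots> = pair (dl g i) h"
      proof -
        have "L (lca M A (dl g i)) = dl g i" using Linv[rule_format, OF fs_dl] .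
        then show ?thesis by (simp add: \<mu>_def)
      qed
      also have "\<dots> = h g $ i" by (rule pair_delta_left)
      finally show "lca M A f g $ i = h g $ i" .
    qed
  qed
qed

theorem corollary1p9:
  fixes M :: "'g::group_add set"
    and A :: "'g \<Rightarrow> 'k::field^'n^'n"
  assumes "finite M"
    and "lca_transpose M A = lca M A"
  shows "surj (lca M A) \<longleftrightarrow> pre_injective (lca M A)"
  using dir1[OF assms] dir2[OF assms] by blast

end
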